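(* Every topological pseudovector (Abelian) group which is metrizable as a topological space admits a subnorm inducing its topology.
   Context: A pseudovector group is a triple $(G,+,* )$ where $(G,+)$ is an Abelian group and $*\colon[0,\infty)\times G\to G$ is an action with $0*x=0$, $1*x=x$, $(st)*x=s*(t*x)$ for all $s,t\geqslant0$, $x\in G$, and $x\mapsto t*x$ a group homomorphism for each $t\geqslant0$. A topological pseudovector group is such a $G$ with a topology making $(G,+)$ a topological group and $*$ continuous. A value on $G$ is $p\colon G\to[0,\infty)$ with $p(x)=0\iff x=0$, $p(-x)=p(x)$, $p(x+y)\leqslant p(x)+p(y)$; it induces the metric $p(x-y)$. A subnorm is a value $\|\cdot\|$ with $\|t*x\|\leqslant\max(t,1)\|x\|$ for all $t\geqslant0$, $x\in G$. *)

theory Defs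
  imports "HOL-Analysis.Analysis"
begin

text \<open>The action of [0,\<infinity>) is a function act :: real \<Rightarrow> 'a \<Rightarrow> 'a;
  only its values for t \<ge> 0 are relevant.\<close>

definition pseudovector_action :: "(real \<Rightarrow> 'a::ab_group_add \<Rightarrow> 'a) \<Rightarrow> bool" where
  "pseudovector_action act \<longleftrightarrow>
     (\<forall>x. act 0 x = 0) \<and> (\<forall>x. act 1 x = x) \<and>
     (\<forall>s t x. s \<ge> 0 \<longrightarrow> t \<ge> 0 \<longrightarrow> act (s * t) x = act s (act t x)) \<and>
     (\<forall>t x y. t \<ge> 0 \<longrightarrow> act t (x + y) = act t x + act t y)"

definition topological_pseudovector_action ::
    "(real \<Rightarrow> 'a::topological_ab_group_add \<Rightarrow> 'a) \<Rightarrow> bool" where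
  "topological_pseudovector_action act \<longleftrightarrow>
     pseudovector_action act \<and>
     continuous_on ({0..} \<times> UNIV) (\<lambda>p. act (fst p) (snd p))"

definition is_value :: "('a::ab_group_add \<Rightarrow> real) \<Rightarrow> bool" where
  "is_value p \<longleftrightarrow>
     (\<forall>x. p x \<ge> 0) \<and> (\<forall>x. p x = 0 \<longleftrightarrow> x = 0) \<and> (\<forall>x. p (- x) = p x) \<and>
     (\<forall>x y. p (x + y) \<le> p x + p y)"

definition is_subnorm :: "(real \<Rightarrow> 'a::ab_group_add \<Rightarrow> 'a) \<Rightarrow> ('a \<Rightarrow> real) \<Rightarrow> bool" where
  "is_subnorm act nrm \<longleftrightarrow>
     is_value nrm \<and> (\<forall>t x. t \<ge> 0 \<longrightarrow> nrm (act t x) \<le> max t 1 * nrm x)"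

definition value_metric :: "('a::ab_group_add \<Rightarrow> real) \<Rightarrow> 'a \<Rightarrow> 'a \<Rightarrow> real" where
  "value_metric p x y = p (x - y)"

end

theory Submission
  imports Defs
begin


lemma exact_subsum:
  fixes e :: "'b \<Rightarrow> nat"
  shows "finite I \<Longrightarrow> (\<forall>i\<in>I. m \<le> e i \<and> e i \<le> m + d) \<Longrightarrow>
     (1/2::real)^m \<le> (\<Sum>i\<in>I. (1/2)^(e i)) \<Longrightarrow> \<exists>J\<subseteq>I. (\<Sum>i\<in>J. (1/2::real)^(e i)) = (1/2)^m"
proof (induction d arbitrary: I m)
  case 0
  then have "I \<noteq> {}" by (auto simp: power_le_zero_eq)
  then obtain i where "i \<in> I" by blast
  with 0 show ?case by (intro exI[of _ "{i}"]) auto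
next
  case (Suc d)
  show ?case
  proof (cases "\<exists>i\<in>I. e i = m")
    case True
    then obtain i where "i \<in> I" "e i = m" by blast
    then show ?thesis by (intro exI[of _ "{i}"]) auto
  next
    case False
    with Suc.prems have b: "\<forall>i\<in>I. Suc m \<le> e i \<and> e i \<le> Suc m + d" by force
    have "(1/2::real)^(Suc m) \<le> (1/2)^m" by simp
    also have "\<dots> \<le> (\<Sum>i\<in>I. (1/2)^(e i))" by fact
    finally obtain J1 where J1: "J1 \<subseteq> I" "(\<Sum>i\<in>J1. (1/2::real)^(e i)) = (1/2)^(Suc m)"
      using Suc.IH[OF Suc.prems(1) b] by blast
    have f2: "finite (I - J1)" using Suc.prems(1) by auto
    have b2: "\<forall>i\<in>I - J1. Suc m \<le> e i \<and> e i \<le> Suc m + d" using b by auto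
    have "(\<Sum>i\<in>I - J1. (1/2::real)^(e i)) = (\<Sum>i\<in>I. (1/2)^(e i)) - (\<Sum>i\<in>J1. (1/2)^(e i))"
      using sum_diff[OF Suc.prems(1) J1(1)] by simp
    also have "\<dots> \<ge> (1/2)^m - (1/2)^(Suc m)" using Suc.prems(3) J1(2) by linarith
    finally have "(\<Sum>i\<in>I - J1. (1/2::real)^(e i)) \<ge> (1/2)^(Suc m)" by simp
    then obtain J2 where J2: "J2 \<subseteq> I - J1" "(\<Sum>i\<in>J2. (1/2::real)^(e i)) = (1/2)^(Suc m)"
      using Suc.IH[OF f2 b2] by blast
    have fin: "finite J1" "finite J2" using J1(1) J2(1) Suc.prems(1) by (auto intro: finite_subset)
    have "(\<Sum>i\<in>J1 \<union> J2. (1/2::real)^(e i)) = (\<Sum>i\<in>J1. (1/2)^(e i)) + (\<Sum>i\<in>J2. (1/2)^(e i))"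
      using J2(1) fin by (intro sum.union_disjoint) auto
    also have "\<dots> = (1/2)^m" using J1(2) J2(2) by simp
    finally show ?thesis using J1(1) J2(1) by (intro exI[of _ "J1 \<union> J2"]) auto
  qed
qed

locale nbhd_seq =
  fixes U :: "nat \<Rightarrow> 'a::ab_group_add set"
  assumes U0: "U 0 = UNIV"
    and zero: "\<And>n. 0 \<in> U n"
    and sym: "\<And>n x. x \<in> U n \<Longrightarrow> - x \<in> U n"
    and add: "\<And>n x y. x \<in> U (Suc n) \<Longrightarrow> y \<in> U (Suc n) \<Longrightarrow> x + y \<in> U n"
begin

lemma mono_Suc: "U (Suc n) \<subseteq> U n"
  using add[of _ n 0] zero by fastforce

lemma mono: "n \<le> m \<Longrightarrow> U m \<subseteq> U n"
  by (induction m rule: dec_induct) (use mono_Suc in auto)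

lemma sumset_in:
  "finite I \<Longrightarrow> (\<forall>i\<in>I. ys i \<in> U (e i)) \<Longrightarrow> (\<Sum>i\<in>I. (1/2::real)^(e i)) \<le> (1/2)^n
    \<Longrightarrow> sum ys I \<in> U n"
proof (induction "card I" arbitrary: I n rule: less_induct)
  case less
  show ?case
  proof (cases "card I \<le> 1")
    case True
    then consider "I = {}" | i where "I = {i}" using less.prems(1)
      by (metis card_0_eq card_1_singletonE le_Suc_eq One_nat_def le_zero_eq)
    then show ?thesis
    proof cases
      case 1 then show ?thesis using zero by simp
    next
      case 2
      then have "n \<le> e i" using less.prems by simp
      then show ?thesis using 2 less.prems mono by auto
    qed
  next
    case False
    define s where "s = (\<Sum>i\<in>I. (1/2::real)^(e i))"
    have Ine: "I \<noteq> {}" using False by auto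
    have spos: "s > 0" unfolding s_def using less.prems(1) Ine by (intro sum_pos) auto
    obtain k where "(1/2::real)^k < s" using real_arch_pow_inv[OF spos] by force
    define k0 where "k0 = (LEAST k. (1/2::real)^k < s)"
    have k0: "(1/2::real)^k0 < s" unfolding k0_def by (rule LeastI) fact
    have "n < k0"
    proof (rule ccontr)
      assume "\<not> n < k0"
      then have "(1/2::real)^n \<le> (1/2)^k0" by simp
      then show False using k0 less.prems(3) s_def by linarith
    qed
    define n' where "n' = k0 - 1"
    have k0e: "k0 = Suc n'" using \<open>n < k0\<close> n'_def by simp
    have "n \<le> n'" using \<open>n < k0\<close> n'_def by simp
    have sle: "s \<le> (1/2)^n'"
    proof -
      have "n' < k0" using k0e by simp
      then have "\<not> (1/2::real)^n' < s" unfolding k0_def by (rule not_less_Least)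
      then show ?thesis by simp
    qed
    have sgt: "(1/2::real)^(Suc n') < s" using k0 k0e by simp
    have ge: "Suc n' \<le> e i" if "i \<in> I" for i
    proof -
      have "card (I - {i}) \<noteq> 0" using False that less.prems(1) by simp
      then obtain j where j: "j \<in> I" "j \<noteq> i"
        by (metis Diff_iff card.empty equals0I singletonI)
      have "(\<Sum>l\<in>{i,j}. (1/2::real)^(e l)) \<le> s"
        unfolding s_def using that j less.prems(1) by (intro sum_mono2) auto
      then have "(1/2::real)^(e i) + (1/2)^(e j) \<le> s" using j by simp
      moreover have "(0::real) < (1/2)^(e j)" by simp
      ultimately have "(1/2::real)^(e i) < s" by linarith
      then have "(1/2::real)^(e i) < (1/2)^n'" using sle by linarith
      then show ?thesis by (metis not_less_eq_eq power_decreasing_iff zero_less_divide_1_iff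
           zero_less_numeral half_gt_zero_iff divide_less_eq_1 one_less_numeral_iff semiring_norm(76) leD)
    qed
    have bnd: "\<forall>i\<in>I. Suc n' \<le> e i \<and> e i \<le> Suc n' + Max (e ` I)"
    proof
      fix i assume "i \<in> I"
      then have "e i \<le> Max (e ` I)" using less.prems(1) by simp
      then show "Suc n' \<le> e i \<and> e i \<le> Suc n' + Max (e ` I)" using ge[OF \<open>i \<in> I\<close>] by simp
    qed
    obtain J where J: "J \<subseteq> I" "(\<Sum>i\<in>J. (1/2::real)^(e i)) = (1/2)^(Suc n')"
    proof -
      have "(1/2::real)^(Suc n') \<le> (\<Sum>i\<in>I. (1/2)^(e i))" using sgt s_def by simp
      from exact_subsum[OF less.prems(1) bnd this] show ?thesis using that by blast
    qed
    have finJ: "finite J" using J(1) less.prems(1) finite_subset by auto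
    have "J \<noteq> I" using J(2) sgt s_def by auto
    then have c1: "card J < card I" using J(1) less.prems(1) by (simp add: psubset_card_mono psubsetI)
    have "J \<noteq> {}" using J(2) by auto
    then have c2: "card (I - J) < card I" using J(1) less.prems(1)
    proof -
      have "card J > 0" using \<open>J \<noteq> {}\<close> finJ by auto
      moreover have "card (I - J) = card I - card J" using card_Diff_subset[OF finJ J(1)] .
      moreover have "card J \<le> card I" using card_mono[OF less.prems(1) J(1)] .
      ultimately show ?thesis by linarith
    qed
    have sd: "(\<Sum>i\<in>I - J. (1/2::real)^(e i)) = s - (1/2)^(Suc n')"
      using sum_diff[OF less.prems(1) J(1), of "\<lambda>i. (1/2::real)^(e i)"] J(2) s_def by (simp only:)
    have "s - (1/2::real)^(Suc n') \<le> (1/2)^(Suc n')" using sle by simp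
    then have h2: "sum ys (I - J) \<in> U (Suc n')"
      using less.hyps[OF c2, of "Suc n'"] less.prems(1,2) sd by auto
    have h1: "sum ys J \<in> U (Suc n')"
      using less.hyps[OF c1, of "Suc n'"] less.prems(2) J finJ by auto
    have "sum ys I = sum ys J + sum ys (I - J)"
      using sum.subset_diff[OF J(1) less.prems(1)] by (simp add: add.commute)
    then have "sum ys I \<in> U n'" using add[OF h1 h2] by simp
    then show ?thesis using mono[OF \<open>n \<le> n'\<close>] by auto
  qed
qed

definition rep :: "'a \<Rightarrow> real \<Rightarrow> bool" where
  "rep x s \<longleftrightarrow> (\<exists>xs. (\<forall>p\<in>set xs. fst p \<in> U (snd p)) \<and> x = sum_list (map fst xs) \<and>
      s = sum_list (map (\<lambda>p. (1/2::real)^(snd p)) xs))"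

definition pv :: "'a \<Rightarrow> real" where
  "pv x = Inf {s. rep x s}"

lemma rep_nonneg: "rep x s \<Longrightarrow> 0 \<le> s"
  unfolding rep_def by (auto intro!: sum_list_nonneg)

lemma rep_U: "x \<in> U n \<Longrightarrow> rep x ((1/2)^n)"
  unfolding rep_def by (rule exI[of _ "[(x,n)]"]) auto

lemma rep_one: "rep x 1"
  using rep_U[of x 0] U0 by simp

lemma rep_zero: "rep 0 0"
  unfolding rep_def by (rule exI[of _ "[]"]) auto

lemma sum_list_neg_aux: "sum_list (map (\<lambda>p. - fst p) xs) = - sum_list (map fst (xs :: ('a \<times> nat) list))"
  by (induction xs) auto

lemma rep_neg: "rep x s \<Longrightarrow> rep (- x) s"
  unfolding rep_def
proof (elim exE conjE)
  fix xs :: "('a \<times> nat) list"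
  assume h: "\<forall>p\<in>set xs. fst p \<in> U (snd p)" "x = sum_list (map fst xs)"
     "s = sum_list (map (\<lambda>p. (1/2::real)^(snd p)) xs)"
  show "\<exists>xs. (\<forall>p\<in>set xs. fst p \<in> U (snd p)) \<and> - x = sum_list (map fst xs) \<and>
      s = sum_list (map (\<lambda>p. (1/2::real)^(snd p)) xs)"
    by (rule exI[of _ "map (\<lambda>p. (- fst p, snd p)) xs"])
       (use h sym in \<open>auto simp: sum_list_neg_aux comp_def\<close>)
qed

lemma rep_add: "rep x s \<Longrightarrow> rep y t \<Longrightarrow> rep (x + y) (s + t)"
  unfolding rep_def
proof (elim exE conjE)
  fix xs ys :: "('a \<times> nat) list"
  assume h: "\<forall>p\<in>set xs. fst p \<in> U (snd p)" "x = sum_list (map fst xs)"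
     "s = sum_list (map (\<lambda>p. (1/2::real)^(snd p)) xs)"
   and g: "\<forall>p\<in>set ys. fst p \<in> U (snd p)" "y = sum_list (map fst ys)"
     "t = sum_list (map (\<lambda>p. (1/2::real)^(snd p)) ys)"
  show "\<exists>xs. (\<forall>p\<in>set xs. fst p \<in> U (snd p)) \<and> x + y = sum_list (map fst xs) \<and>
      s + t = sum_list (map (\<lambda>p. (1/2::real)^(snd p)) xs)"
    by (rule exI[of _ "xs @ ys"]) (use h g in auto)
qed

lemma rep_small: "rep x s \<Longrightarrow> s \<le> (1/2)^n \<Longrightarrow> x \<in> U n"
  unfolding rep_def
proof (elim exE conjE)
  fix xs :: "('a \<times> nat) list"
  assume h: "\<forall>p\<in>set xs. fst p \<in> U (snd p)" "x = sum_list (map fst xs)"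
     "s = sum_list (map (\<lambda>p. (1/2::real)^(snd p)) xs)" and sn: "s \<le> (1/2)^n"
  have x: "x = (\<Sum>i\<in>{0..<length xs}. fst (xs ! i))"
    using h(2) by (simp add: sum_list_sum_nth)
  have s: "s = (\<Sum>i\<in>{0..<length xs}. (1/2::real)^(snd (xs ! i)))"
    using h(3) by (simp add: sum_list_sum_nth)
  have "(\<Sum>i\<in>{0..<length xs}. fst (xs ! i)) \<in> U n"
    by (rule sumset_in) (use h(1) sn s in \<open>auto simp: nth_mem\<close>)
  then show "x \<in> U n" using x by simp
qed

lemma rep_ne: "{s. rep x s} \<noteq> {}" and rep_bdd: "bdd_below {s. rep x s}"
  using rep_one rep_nonneg by (auto intro!: bdd_belowI)

lemma pv_nonneg: "0 \<le> pv x"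
  unfolding pv_def using rep_ne by (rule cInf_greatest) (auto intro: rep_nonneg)

lemma pv_le_rep: "rep x s \<Longrightarrow> pv x \<le> s"
  unfolding pv_def by (rule cInf_lower) (use rep_bdd in auto)

lemma pv_le1: "pv x \<le> 1"
  using pv_le_rep[OF rep_one] .

lemma pv_U: "x \<in> U n \<Longrightarrow> pv x \<le> (1/2)^n"
  using pv_le_rep[OF rep_U] .

lemma pv_zero: "pv 0 = 0"
  using pv_le_rep[OF rep_zero] pv_nonneg[of 0] by simp

lemma pv_small: "pv x < (1/2)^n \<Longrightarrow> x \<in> U n"
proof -
  assume "pv x < (1/2)^n"
  then obtain s where "s \<in> {s. rep x s}" "s < (1/2)^n"
    using cInf_lessD[OF rep_ne] unfolding pv_def by blast
  then show ?thesis using rep_small by auto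
qed

lemma pv_neg: "pv (- x) = pv x"
proof -
  have "{s. rep (- x) s} = {s. rep x s}"
    using rep_neg[of x] rep_neg[of "- x"] by auto
  then show ?thesis unfolding pv_def by simp
qed

lemma pv_add: "pv (x + y) \<le> pv x + pv y"
proof -
  have "pv (x + y) - t \<le> pv x" if t: "rep y t" for t
  proof -
    have "pv (x + y) - t \<le> s" if "rep x s" for s
      using pv_le_rep[OF rep_add[OF that t]] by simp
    then have "pv (x + y) - t \<le> Inf {s. rep x s}"
      using rep_ne by (intro cInf_greatest) auto
    then show ?thesis unfolding pv_def .
  qed
  then have "pv (x + y) - pv x \<le> t" if "rep y t" for t using that by fastforce
  then have "pv (x + y) - pv x \<le> Inf {s. rep y s}"
    using rep_ne by (intro cInf_greatest) auto
  then show ?thesis unfolding pv_def by simp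
qed

lemma pv_eq0: "(\<Inter>n. U n) \<subseteq> {0} \<Longrightarrow> pv x = 0 \<longleftrightarrow> x = 0"
proof
  assume I: "(\<Inter>n. U n) \<subseteq> {0}" and "pv x = 0"
  then have "x \<in> U n" for n by (intro pv_small) simp
  then show "x = 0" using I by blast
qed (simp add: pv_zero)

end


lemma half_nbhd:
  fixes V :: "'a::topological_ab_group_add set"
  assumes "open V" "0 \<in> V"
  shows "\<exists>W. open W \<and> 0 \<in> W \<and> (\<forall>w\<in>W. - w \<in> W) \<and> (\<forall>a\<in>W. \<forall>b\<in>W. a + b \<in> V)"
proof -
  have c: "continuous_on UNIV (\<lambda>z::'a\<times>'a. fst z + snd z)" by (intro continuous_intros)
  have "open ((\<lambda>z::'a\<times>'a. fst z + snd z) -` V)"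
    using continuous_on_open_vimage[of UNIV] c assms(1) by auto
  moreover have "(0,0) \<in> (\<lambda>z::'a\<times>'a. fst z + snd z) -` V" using assms(2) by simp
  ultimately obtain A B where AB: "open A" "open B" "(0,0) \<in> A \<times> B"
      "A \<times> B \<subseteq> (\<lambda>z::'a\<times>'a. fst z + snd z) -` V"
    by (rule open_prod_elim)
  define W0 where "W0 = A \<inter> B"
  have cu: "continuous_on UNIV (uminus :: 'a \<Rightarrow> 'a)" by (intro continuous_intros)
  have oW0: "open W0" using AB W0_def by auto
  have "open (uminus -` W0)"
    using continuous_on_open_vimage[of UNIV] cu oW0 by auto
  then have "open (W0 \<inter> uminus -` W0)" using oW0 by auto
  moreover have "0 \<in> W0 \<inter> uminus -` W0" using AB W0_def by auto
  moreover have "\<forall>w\<in>W0 \<inter> uminus -` W0. - w \<in> W0 \<inter> uminus -` W0" by auto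
  moreover have "\<forall>a\<in>W0 \<inter> uminus -` W0. \<forall>b\<in>W0 \<inter> uminus -` W0. a + b \<in> V"
    using AB(4) W0_def by auto
  ultimately show ?thesis by blast
qed

lemma div_max_le: "0 \<le> (a::real) \<Longrightarrow> a / max t 1 \<le> a"
  by (simp add: divide_le_eq mult_le_cancel_left1 max_def)

locale subnorm_constr = nbhd_seq U for U :: "nat \<Rightarrow> 'a::ab_group_add set" +
  fixes act :: "real \<Rightarrow> 'a \<Rightarrow> 'a"
  assumes pva: "pseudovector_action act"
    and sep: "(\<Inter>n. U n) \<subseteq> {0}"
begin

lemma act0: "act 0 x = 0" and act1: "act 1 x = x"
  and actm: "s \<ge> 0 \<Longrightarrow> t \<ge> 0 \<Longrightarrow> act (s * t) x = act s (act t x)"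
  and acta: "t \<ge> 0 \<Longrightarrow> act t (x + y) = act t x + act t y"
  using pva unfolding pseudovector_action_def by auto

lemma act_zero: "t \<ge> 0 \<Longrightarrow> act t 0 = 0"
  using acta[of t 0 0] by simp

lemma act_neg: "t \<ge> 0 \<Longrightarrow> act t (- x) = - act t x"
  using acta[of t x "- x"] act_zero[of t] by (metis add.commute add_right_cancel neg_eq_iff_add_eq_0 add.left_inverse)

definition N :: "'a \<Rightarrow> real" where
  "N x = (SUP t\<in>{0..}. pv (act t x) / max t 1)"

lemma term_le1: "pv (act t x) / max t 1 \<le> 1"
  using div_max_le[OF pv_nonneg, of "act t x" t] pv_le1[of "act t x"] by linarith

lemma bdd: "bdd_above ((\<lambda>t. pv (act t x) / max t 1) ` {0..})"
  by (rule bdd_aboveI[of _ 1]) (use term_le1 in auto)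

lemma N_ge: "t \<ge> 0 \<Longrightarrow> pv (act t x) / max t 1 \<le> N x"
  unfolding N_def by (rule cSUP_upper[OF _ bdd]) auto

lemma N_le: "(\<And>t. t \<ge> 0 \<Longrightarrow> pv (act t x) / max t 1 \<le> c) \<Longrightarrow> N x \<le> c"
  unfolding N_def by (rule cSUP_least) auto

lemma pv_le_N: "pv x \<le> N x"
  using N_ge[of 1 x] act1 by simp

lemma N_nonneg: "0 \<le> N x"
  using pv_le_N pv_nonneg order_trans by blast

lemma N_zero: "N 0 = 0"
proof -
  have "N 0 \<le> 0"
    by (rule N_le) (simp add: act_zero pv_zero)
  then show ?thesis using N_nonneg[of 0] by linarith
qed

lemma N_eq0: "N x = 0 \<longleftrightarrow> x = 0"
  using N_zero pv_le_N[of x] pv_nonneg[of x] pv_eq0[OF sep, of x] by auto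

lemma N_neg: "N (- x) = N x"
proof -
  have "N (- y) \<le> N y" for y
  proof (rule N_le)
    fix t :: real assume t: "t \<ge> 0"
    have "pv (act t (- y)) = pv (act t y)" using t by (simp add: act_neg pv_neg)
    then show "pv (act t (- y)) / max t 1 \<le> N y" using N_ge[OF t, of y] by simp
  qed
  from this[of x] this[of "- x"] show ?thesis by simp
qed

lemma N_add: "N (x + y) \<le> N x + N y"
proof (rule N_le)
  fix t :: real assume t: "t \<ge> 0"
  have "pv (act t (x + y)) / max t 1 \<le> (pv (act t x) + pv (act t y)) / max t 1"
    using acta[OF t] pv_add by (simp add: divide_right_mono)
  also have "\<dots> = pv (act t x) / max t 1 + pv (act t y) / max t 1" by (simp add: add_divide_distrib)
  also have "\<dots> \<le> N x + N y" using N_ge[OF t, of x] N_ge[OF t, of y] by linarith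
  finally show "pv (act t (x + y)) / max t 1 \<le> N x + N y" .
qed

lemma N_act: "s \<ge> 0 \<Longrightarrow> N (act s x) \<le> max s 1 * N x"
proof (rule N_le)
  fix t :: real assume s: "s \<ge> 0" and t: "t \<ge> 0"
  have ts: "t * s \<ge> 0" using s t by simp
  have "pv (act (t * s) x) \<le> N x * max (t * s) 1"
    using N_ge[OF ts, of x] by (simp add: divide_le_eq)
  also have "max (t * s) 1 \<le> max t 1 * max s 1"
  proof -
    have "t * s \<le> max t 1 * max s 1" using s t by (intro mult_mono) auto
    moreover have "1 \<le> max t 1 * max s 1"
      using mult_mono[of 1 "max t 1" 1 "max s 1"] by simp
    ultimately show ?thesis by simp
  qed
  then have "N x * max (t * s) 1 \<le> N x * (max t 1 * max s 1)"
    using N_nonneg[of x] by (rule mult_left_mono)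
  finally have "pv (act (t * s) x) / max t 1 \<le> max s 1 * N x"
    by (simp add: divide_le_eq mult_ac)
  then show "pv (act t (act s x)) / max t 1 \<le> max s 1 * N x"
    using actm[OF t s] by simp
qed

lemma N_subnorm: "is_subnorm act N"
  unfolding is_subnorm_def is_value_def
  using N_nonneg N_eq0 N_neg N_add N_act by auto

lemma N_metric: "Metric_space UNIV (value_metric N)"
proof
  fix x y z :: 'a
  show "0 \<le> value_metric N x y" by (simp add: value_metric_def N_nonneg)
  show "value_metric N x y = value_metric N y x"
    unfolding value_metric_def using N_neg[of "x - y"] by simp
  show "(value_metric N x y = 0) = (x = y)" by (simp add: value_metric_def N_eq0)
  show "value_metric N x z \<le> value_metric N x y + value_metric N y z"
    unfolding value_metric_def using N_add[of "x - y" "y - z"] by simp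
qed

end


locale topo_constr = subnorm_constr U act for U :: "nat \<Rightarrow> 'a::topological_ab_group_add set" and act +
  assumes openU: "\<And>n. open (U n)"
    and base: "\<And>V. open V \<Longrightarrow> 0 \<in> V \<Longrightarrow> \<exists>n. U n \<subseteq> V"
    and cont: "continuous_on ({0..} \<times> UNIV) (\<lambda>p. act (fst p) (snd p))"
begin

lemma small_nbhd:
  assumes r: "r > 0"
  shows "\<exists>W. open W \<and> 0 \<in> W \<and> (\<forall>w\<in>W. N w < r)"
proof -
  define c where "c = r / 2"
  have c: "c > 0" "c < r" using r c_def by auto
  obtain n where n: "(1/2::real)^n < c" using real_arch_pow_inv[OF c(1), of "1/2"] by auto
  define T where "T = max 1 (1 / c)"
  have T1: "T \<ge> 1" unfolding T_def by simp
  obtain A where A: "open A" "A \<inter> ({0..} \<times> UNIV) = (\<lambda>p. act (fst p) (snd p)) -` U n \<inter> ({0..} \<times> UNIV)"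
    using cont openU[of n] unfolding continuous_on_open_invariant by blast
  define A' where "A' = (\<lambda>z::'a\<times>real. (snd z, fst z)) -` A"
  have csw: "continuous_on UNIV (\<lambda>z::'a\<times>real. (snd z, fst z))" by (intro continuous_intros)
  have "open ((\<lambda>z::'a\<times>real. (snd z, fst z)) -` A \<inter> UNIV)"
    using csw A(1) continuous_on_open_vimage[OF open_UNIV] by blast
  then have oA': "open A'" unfolding A'_def by simp
  have "{0} \<times> {0..T} \<subseteq> A'"
  proof
    fix z assume "z \<in> {0::'a} \<times> {0..T}"
    then obtain t where z: "z = (0, t)" "t \<in> {0..T}" by auto
    then have "(t, 0::'a) \<in> (\<lambda>p. act (fst p) (snd p)) -` U n \<inter> ({0..} \<times> UNIV)"
      using act_zero zero by auto
    then show "z \<in> A'" using A(2) z unfolding A'_def by auto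
  qed
  then obtain X0 where X0: "0 \<in> X0" "open X0" "X0 \<times> {0..T} \<subseteq> A'"
  proof -
    from Elementary_Topology.tube_lemma[OF compact_Icc oA' \<open>{0} \<times> {0..T} \<subseteq> A'\<close>]
    show ?thesis using that by (elim exE conjE)
  qed
  have "N w < r" if w: "w \<in> X0" for w
  proof -
    have "N w \<le> c"
    proof (rule N_le)
      fix t :: real assume t: "t \<ge> 0"
      show "pv (act t w) / max t 1 \<le> c"
      proof (cases "t \<le> T")
        case True
        then have "(w, t) \<in> X0 \<times> {0..T}" using w t by simp
        then have "(w, t) \<in> A'" using X0(3) by (rule subsetD[rotated])
        then have "(t, w) \<in> A \<inter> ({0..} \<times> UNIV)" unfolding A'_def using t by auto
        then have "act t w \<in> U n" using A(2) by auto
        then have "pv (act t w) \<le> (1/2)^n" by (rule pv_U)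
        then have "pv (act t w) \<le> c" using n by linarith
        then show ?thesis using div_max_le[OF pv_nonneg, of "act t w" t] by linarith
      next
        case False
        then have tT: "t > T" by simp
        have "pv (act t w) / max t 1 \<le> 1 / max t 1"
          using pv_le1 by (intro divide_right_mono) auto
        also have "\<dots> = 1 / t" using tT T1 by simp
        also have "\<dots> \<le> 1 / T" using tT T1 by (intro divide_left_mono) auto
        also have "\<dots> \<le> c"
        proof -
          have "1 / c \<le> T" unfolding T_def by simp
          then have "1 / T \<le> 1 / (1 / c)" using c(1) T1 by (intro divide_left_mono) auto
          then show ?thesis by simp
        qed
        finally show ?thesis .
      qed
    qed
    then show ?thesis using c(2) by linarith
  qed
  then show ?thesis using X0 by blast
qed

lemma mtop: "Metric_space.mtopology UNIV (value_metric N) = (euclidean :: 'a topology)"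
proof -
  interpret M: Metric_space UNIV "value_metric N" by (rule N_metric)
  have "openin M.mtopology S \<longleftrightarrow> open S" for S
  proof
    assume S: "openin M.mtopology S"
    show "open S"
    proof (rule Topological_Spaces.openI)
      fix x assume x: "x \<in> S"
      from S x obtain r where r: "r > 0" "M.mball x r \<subseteq> S" unfolding M.openin_mtopology by blast
      obtain W where W: "open W" "0 \<in> W" "\<forall>w\<in>W. N w < r" using small_nbhd[OF r(1)] by blast
      define T where "T = (\<lambda>y. y - x) -` W"
      have cd: "continuous_on UNIV (\<lambda>y::'a. y - x)" by (intro continuous_intros)
      have "open ((\<lambda>y. y - x) -` W \<inter> UNIV)"
        using cd W(1) continuous_on_open_vimage[OF open_UNIV] by blast
      then have "open T" unfolding T_def by simp
      moreover have "x \<in> T" using W(2) T_def by simp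
      moreover have "T \<subseteq> S"
      proof
        fix y assume "y \<in> T"
        then have "N (y - x) < r" using W(3) T_def by auto
        moreover have "N (x - y) = N (y - x)" using N_neg[of "y - x"] by (simp only: minus_diff_eq)
        ultimately have "value_metric N x y < r"
          unfolding value_metric_def by simp
        then have "y \<in> M.mball x r" by simp
        then show "y \<in> S" using r(2) by (rule subsetD[rotated])
      qed
      ultimately show "\<exists>T. open T \<and> x \<in> T \<and> T \<subseteq> S" by blast
    qed
  next
    assume S: "open S"
    show "openin M.mtopology S"
      unfolding M.openin_mtopology
    proof (intro conjI allI impI)
      fix x assume x: "x \<in> S"
      define V where "V = (\<lambda>w. x + w) -` S"
      have cd: "continuous_on UNIV (\<lambda>w::'a. x + w)" by (intro continuous_intros)
      have "open ((\<lambda>w. x + w) -` S \<inter> UNIV)"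
        using cd S continuous_on_open_vimage[OF open_UNIV] by blast
      then have "open V" unfolding V_def by simp
      moreover have "0 \<in> V" using x V_def by simp
      ultimately obtain n where n: "U n \<subseteq> V" using base by blast
      have "M.mball x ((1/2)^n) \<subseteq> S"
      proof
        fix y assume "y \<in> M.mball x ((1/2)^n)"
        then have "N (x - y) < (1/2)^n" by (simp add: value_metric_def)
        then have "pv (x - y) < (1/2)^n" using pv_le_N[of "x - y"] by linarith
        then have xy: "x - y \<in> U n" by (rule pv_small)
        have "y - x \<in> U n" using sym[OF xy] by simp
        then have "x + (y - x) \<in> S" using n V_def by auto
        then show "y \<in> S" by simp
      qed
      then show "\<exists>r>0. M.mball x r \<subseteq> S" by (intro exI[of _ "(1/2)^n"]) auto
    qed simp
  qed
  then show ?thesis unfolding topology_eq by simp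
qed

end


theorem proposition6p4:
  fixes act :: "real \<Rightarrow> 'a::topological_ab_group_add \<Rightarrow> 'a"
  assumes "topological_pseudovector_action act"
    and "metrizable_space (euclidean :: 'a topology)"
  shows "\<exists>nrm. is_subnorm act nrm \<and>
           Metric_space.mtopology UNIV (value_metric nrm) = (euclidean :: 'a topology)"
proof -
  have pva: "pseudovector_action act"
    and cont: "continuous_on ({0..} \<times> UNIV) (\<lambda>p. act (fst p) (snd p))"
    using assms(1) unfolding topological_pseudovector_action_def by auto
  from assms(2) obtain M d where Md: "Metric_space M d" "(euclidean :: 'a topology) = Metric_space.mtopology M d"
    unfolding metrizable_space_def by blast
  interpret D: Metric_space M d by (rule Md(1))
  have MU: "M = UNIV"
  proof -
    have "topspace D.mtopology = M" by simp
    then show ?thesis unfolding Md(2)[symmetric] by simp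
  qed
  have opn: "open V \<longleftrightarrow> openin D.mtopology V" for V
    unfolding Md(2)[symmetric] by simp
  define B where "B k = D.mball 0 (inverse (real (Suc k)))" for k
  have oB: "open (B k)" for k unfolding opn B_def by simp
  have B0: "0 \<in> B k" for k unfolding B_def
    by (rule D.centre_in_mball_iff[THEN iffD2]) (simp add: MU)
  have Bbase: "\<exists>k. B k \<subseteq> V" if "open V" "0 \<in> V" for V
  proof -
    from that obtain r where r: "r > 0" "D.mball 0 r \<subseteq> V"
      unfolding opn D.openin_mtopology by blast
    obtain k where k: "inverse (real (Suc k)) < r" using reals_Archimedean[OF r(1)] by auto
    have "B k \<subseteq> D.mball 0 r" unfolding B_def using k by (intro D.mball_subset_concentric) simp
    then show ?thesis using r(2) by blast
  qed
  have Bsep: "\<exists>k. x \<notin> B k" if "x \<noteq> 0" for x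
  proof -
    have "0 \<in> M" "x \<in> M" by (simp_all add: MU)
    then have "d 0 x \<noteq> 0" using that D.zero[of 0 x] by simp
    then have "d 0 x > 0" using D.nonneg[of 0 x] by linarith
    then obtain k where k: "inverse (real (Suc k)) < d 0 x" using reals_Archimedean by blast
    then have "x \<notin> B k" unfolding B_def by simp
    then show ?thesis by blast
  qed
  define P where "P k V W \<longleftrightarrow> open W \<and> 0 \<in> W \<and> (\<forall>w\<in>W. - w \<in> W) \<and>
          (\<forall>a\<in>W. \<forall>b\<in>W. a + b \<in> V) \<and> W \<subseteq> B k" for k V W
  have "\<forall>k V. \<exists>W. open V \<and> 0 \<in> V \<longrightarrow> P k V W"
  proof (intro allI)
    fix k V
    show "\<exists>W. open V \<and> 0 \<in> V \<longrightarrow> P k V W"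
    proof (cases "open V \<and> 0 \<in> V")
      case True
      then have "open (V \<inter> B k)" "0 \<in> V \<inter> B k" using oB B0 by auto
      from half_nbhd[OF this] obtain W where W: "open W" "0 \<in> W" "\<forall>w\<in>W. - w \<in> W"
        "\<forall>a\<in>W. \<forall>b\<in>W. a + b \<in> V \<inter> B k" by blast
      have "W \<subseteq> B k"
      proof
        fix w assume "w \<in> W"
        then have "w + 0 \<in> V \<inter> B k" using W(2,4) by blast
        then show "w \<in> B k" by simp
      qed
      moreover have "\<forall>a\<in>W. \<forall>b\<in>W. a + b \<in> V" using W(4) by blast
      ultimately have "P k V W" unfolding P_def using W(1-3) by simp
      then show ?thesis by blast
    next
      case False
      then show ?thesis by blast
    qed
  qed
  then have "\<exists>G. \<forall>k V. open V \<and> 0 \<in> V \<longrightarrow> P k V (G k V)"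
    by (simp only: choice_iff)
  then obtain G where G0: "\<forall>k V. open V \<and> 0 \<in> V \<longrightarrow> P k V (G k V)"
    by (elim exE)
  have G: "P k V (G k V)" if "open V" "0 \<in> V" for k V
    using G0[THEN spec, of k, THEN spec, of V] that by simp
  define U where "U = rec_nat UNIV G"
  have U0: "U 0 = UNIV" and US: "U (Suc n) = G n (U n)" for n by (simp_all add: U_def)
  have Uo: "open (U n) \<and> 0 \<in> U n" for n
  proof (induction n)
    case 0 then show ?case using U0 by simp
  next
    case (Suc n)
    then have "P n (U n) (G n (U n))" using G by blast
    then show ?case unfolding US P_def by simp
  qed
  have UG: "open (U (Suc n)) \<and> 0 \<in> U (Suc n) \<and> (\<forall>w\<in>U (Suc n). - w \<in> U (Suc n)) \<and>
     (\<forall>a\<in>U (Suc n). \<forall>b\<in>U (Suc n). a + b \<in> U n) \<and> U (Suc n) \<subseteq> B n" for n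
  proof -
    have "P n (U n) (G n (U n))" using G Uo[of n] by blast
    then show ?thesis unfolding US P_def .
  qed
  have "topo_constr U act"
  proof (unfold_locales)
    show "U 0 = UNIV" by (rule U0)
    show "0 \<in> U n" for n using Uo by blast
    show "- x \<in> U n" if "x \<in> U n" for x n
    proof (cases n)
      case 0 then show ?thesis using U0 by simp
    next
      case (Suc m) then show ?thesis using that UG[of m] by blast
    qed
    show "x + y \<in> U n" if "x \<in> U (Suc n)" "y \<in> U (Suc n)" for x y n
      using that UG[of n] by blast
    show "pseudovector_action act" by (rule pva)
    show "(\<Inter>n. U n) \<subseteq> {0}"
    proof
      fix x assume x: "x \<in> (\<Inter>n. U n)"
      show "x \<in> {0}"
      proof (rule ccontr)
        assume "x \<notin> {0}"
        then obtain k where "x \<notin> B k" using Bsep by auto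
        moreover have "x \<in> U (Suc k)" using x by blast
        ultimately show False using UG[of k] by blast
      qed
    qed
    show "open (U n)" for n using Uo by blast
    show "\<exists>n. U n \<subseteq> V" if V: "open V" "0 \<in> V" for V
    proof -
      obtain k where "B k \<subseteq> V" using Bbase[OF V] by blast
      then have "U (Suc k) \<subseteq> V" using UG[of k] by blast
      then show ?thesis by blast
    qed
    show "continuous_on ({0..} \<times> UNIV) (\<lambda>p. act (fst p) (snd p))" by (rule cont)
  qed
  then interpret T: topo_constr U act .
  show ?thesis using T.N_subnorm T.mtop by blast
qed


end
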